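(* Let $P\in\mathfrak N_2$ and let $r:P\to R$ be a retraction onto a retract $R$ of width three which is a tower of nice sections. Suppose $\ell\in[0,h_R-1]$ satisfies $R(\ell)<R(\ell+1)$, and suppose there is $k\in[0,h_P-1]$ such that either (a) $R(\ell)=P(k)$, or (b) $R(\ell)\subsetneq P(k)$, $P(k)\cup P(k+1)$ is of type $3C$, and $r[P(k+1)]\subseteq R(\ell+1\to h_R)$. Then $k\le h_P-3$, $P(k+1)\cup P(k+2)$ is of type $3C$, and $r[P(k+1)]=R(\ell+1)\subseteq P(k+2)$.
   Context: All posets are finite; $h_P$ is the height; level sets $P(0)=\min P$, $P(k+1)=\min(P\setminus\bigcup_{i\le k}P(i))$; $P(k\to\ell)=\bigcup_{i=k}^\ell P(i)$; level sets of $R$ refer to $R$'s own levels. $A<B$ means $a<b$ for all $a\in A,b\in B$. A retraction $r:P\to R$ is an idempotent order-preserving self-map with image $R$. Type $3C$: three disjoint 2-element chains, no further comparabilities. A section is either a 2-element antichain or a poset $P$ of height $h_P\ge1$ with carrier $\{c_{k,j}:k\in[0,h_P],j\in\{0,1,2\}\}$ such that: $c_{0,j}<\dots<c_{h_P,j}$ for each $j$; each $\{c_{k,0},c_{k,1},c_{k,2}\}$ is an antichain; $c_{k,i}<c_{\ell,j}\Rightarrow c_{k,i+1}<c_{\ell,j+1}$ (indices mod 3); and for no $k$ is $P(k)<P(k+1)$ with both 3-element. A section is nice if for all $x<y$: $\{z:z>x\}\not\subseteq\{z:z\ge y\}$ and $\{z:z<y\}\not\subseteq\{z:z\le x\}$.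 A tower of nice sections is an ordinal sum of nice sections. $\mathfrak N_2$ is the class of nice sections of width three of height $\ge2$ with horizon 2, i.e. $P(k)<P(\ell)$ whenever $\ell\ge k+2$; consecutive level pairs are 6-crowns or of type $3C$. *)

theory Defs
  imports Main
begin

(* Finite posets are represented as finite carrier sets P :: 'a set of a type
   'a :: order, carrying the induced order.  Subposets (e.g. the retract R)
   carry the induced order as well. *)

definition mins :: "'a::order set \<Rightarrow> 'a set" where
  "mins S = {x \<in> S. \<not> (\<exists>y\<in>S. y < x)}"

fun rest :: "'a::order set \<Rightarrow> nat \<Rightarrow> 'a set" where
  "rest S 0 = S"
| "rest S (Suc k) = rest S k - mins (rest S k)"

definition level :: "'a::order set \<Rightarrow> nat \<Rightarrow> 'a set" where
  "level S k = mins (rest S k)"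

definition levels_between :: "'a::order set \<Rightarrow> nat \<Rightarrow> nat \<Rightarrow> 'a set" where
  "levels_between S k l = (\<Union>i\<in>{k..l}. level S i)"

definition set_less :: "'a::order set \<Rightarrow> 'a set \<Rightarrow> bool" where
  "set_less A B \<longleftrightarrow> (\<forall>a\<in>A. \<forall>b\<in>B. a < b)"

definition is_chain :: "'a::order set \<Rightarrow> bool" where
  "is_chain C \<longleftrightarrow> (\<forall>x\<in>C. \<forall>y\<in>C. x \<le> y \<or> y \<le> x)"

definition is_antichain :: "'a::order set \<Rightarrow> bool" where
  "is_antichain A \<longleftrightarrow> (\<forall>x\<in>A. \<forall>y\<in>A. x \<le> y \<longrightarrow> x = y)"

definition height :: "'a::order set \<Rightarrow> nat" where
  "height S = Max ((\<lambda>C. card C - 1) ` {C. C \<subseteq> S \<and> is_chain C})"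

definition width :: "'a::order set \<Rightarrow> nat" where
  "width S = Max (card ` {A. A \<subseteq> S \<and> is_antichain A})"

definition type_3C :: "'a::order set \<Rightarrow> bool" where
  "type_3C S \<longleftrightarrow> (\<exists>a0 a1 a2 b0 b1 b2. S = {a0, a1, a2, b0, b1, b2} \<and> card S = 6 \<and>
     (\<forall>x\<in>S. \<forall>y\<in>S. x < y \<longleftrightarrow>
        ((x = a0 \<and> y = b0) \<or> (x = a1 \<and> y = b1) \<or> (x = a2 \<and> y = b2))))"

definition is_section :: "'a::order set \<Rightarrow> bool" where
  "is_section S \<longleftrightarrow>
    (card S = 2 \<and> is_antichain S) \<or>
    (height S \<ge> 1 \<and>
     (\<exists>c :: nat \<Rightarrow> nat \<Rightarrow> 'a.
        inj_on (\<lambda>(k, j). c k j) ({0..height S} \<times> {0..<3}) \<and>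
        S = (\<lambda>(k, j). c k j) ` ({0..height S} \<times> {0..<3}) \<and>
        (\<forall>j<3. \<forall>k<height S. c k j < c (Suc k) j) \<and>
        (\<forall>k\<le>height S. is_antichain {c k 0, c k 1, c k 2}) \<and>
        (\<forall>k\<le>height S. \<forall>l\<le>height S. \<forall>i<3. \<forall>j<3.
            c k i < c l j \<longrightarrow> c k ((i + 1) mod 3) < c l ((j + 1) mod 3))) \<and>
     \<not> (\<exists>k. set_less (level S k) (level S (Suc k)) \<and>
            card (level S k) = 3 \<and> card (level S (Suc k)) = 3))"

definition is_nice :: "'a::order set \<Rightarrow> bool" where
  "is_nice S \<longleftrightarrow> (\<forall>x\<in>S. \<forall>y\<in>S. x < y \<longrightarrow>
      \<not> ({z\<in>S. x < z} \<subseteq> {z\<in>S. y \<le> z}) \<and> \<not> ({z\<in>S. z < y} \<subseteq> {z\<in>S. z \<le> x}))"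

definition tower_of_nice_sections :: "'a::order set \<Rightarrow> bool" where
  "tower_of_nice_sections S \<longleftrightarrow> (\<exists>Qs. Qs \<noteq> [] \<and> S = \<Union>(set Qs) \<and>
      (\<forall>i<length Qs. is_section (Qs ! i) \<and> is_nice (Qs ! i)) \<and>
      (\<forall>i j. i < j \<and> j < length Qs \<longrightarrow> set_less (Qs ! i) (Qs ! j)))"

definition in_N2 :: "'a::order set \<Rightarrow> bool" where
  "in_N2 P \<longleftrightarrow> finite P \<and> is_section P \<and> is_nice P \<and> width P = 3 \<and> height P \<ge> 2 \<and>
      (\<forall>k l. k + 2 \<le> l \<longrightarrow> set_less (level P k) (level P l))"

definition retraction :: "'a::order set \<Rightarrow> ('a \<Rightarrow> 'a) \<Rightarrow> 'a set \<Rightarrow> bool" where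
  "retraction P r R \<longleftrightarrow> (\<forall>x\<in>P. r x \<in> P) \<and> (\<forall>x\<in>P. \<forall>y\<in>P. x \<le> y \<longrightarrow> r x \<le> r y) \<and>
      (\<forall>x\<in>P. r (r x) = r x) \<and> r ` P = R"

end

theory Submission
  imports Defs
begin


lemma rest_sub: "rest S k \<subseteq> S"
  by (induction k) auto

lemma rest_anti: "i \<le> j \<Longrightarrow> rest S j \<subseteq> rest S i"
proof (induction j)
  case 0 then show ?case by simp
next
  case (Suc j) then show ?case by (cases "i = Suc j") auto
qed

lemma level_sub_rest: "level S k \<subseteq> rest S k"
  by (auto simp: level_def mins_def)

lemma level_sub: "level S k \<subseteq> S"
  using level_sub_rest rest_sub by blast

lemma level_antichain: "x \<in> level S k \<Longrightarrow> y \<in> level S k \<Longrightarrow> \<not> x < y"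
  by (auto simp: level_def mins_def)

lemma level_antichain_le: "x \<in> level S k \<Longrightarrow> y \<in> level S k \<Longrightarrow> x \<le> y \<Longrightarrow> x = y"
  using level_antichain[of x S k y] by (auto simp: le_less)

lemma level_mono_lt:
  assumes "x \<in> level S i" "y \<in> level S j" "x < y" shows "i < j"
proof (rule ccontr)
  assume "\<not> i < j"
  then have "rest S i \<subseteq> rest S j" using rest_anti[of j i S] by simp
  then have "x \<in> rest S j" using assms(1) level_sub_rest by blast
  then show False using assms(2,3) by (auto simp: level_def mins_def)
qed

lemma level_disj: "x \<in> level S i \<Longrightarrow> x \<in> level S j \<Longrightarrow> i = j"
proof (rule ccontr)
  assume a: "x \<in> level S i" "x \<in> level S j" "i \<noteq> j"
  { fix i j assume "x \<in> level S i" "x \<in> level S j" "i < j"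
    then have "rest S j \<subseteq> rest S (Suc i)" using rest_anti[of "Suc i" j S] by simp
    moreover have "x \<in> rest S j" using \<open>x \<in> level S j\<close> level_sub_rest by blast
    ultimately have "x \<in> rest S (Suc i)" by blast
    then have False using \<open>x \<in> level S i\<close> by (simp add: level_def) }
  then show False using a by (metis linorder_neq_iff)
qed

lemma mins_ne: "finite A \<Longrightarrow> A \<noteq> {} \<Longrightarrow> mins A \<noteq> {}"
  using finite_has_minimal[of A] by (auto simp: mins_def less_le)

lemma rest_card: "finite S \<Longrightarrow> rest S k \<noteq> {} \<Longrightarrow> card (rest S k) + k \<le> card S"
proof (induction k)
  case 0 then show ?case by simp
next
  case (Suc k)
  have f: "finite (rest S k)" using Suc.prems(1) rest_sub finite_subset by blast
  have ne: "rest S k \<noteq> {}" using Suc.prems(2) by auto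
  have "mins (rest S k) \<noteq> {}" using mins_ne f ne by blast
  moreover have "mins (rest S k) \<subseteq> rest S k" by (auto simp: mins_def)
  ultimately have "card (rest S (Suc k)) < card (rest S k)"
  proof -
    have "finite (mins (rest S k))" using f \<open>mins (rest S k) \<subseteq> rest S k\<close> finite_subset by blast
    then have "card (mins (rest S k)) > 0" using \<open>mins (rest S k) \<noteq> {}\<close> by (simp add: card_gt_0_iff)
    moreover have "card (rest S (Suc k)) = card (rest S k) - card (mins (rest S k))"
      using card_Diff_subset \<open>mins (rest S k) \<subseteq> rest S k\<close> \<open>finite (mins (rest S k))\<close> by simp
    moreover have "card (rest S k) > 0" using f ne by (simp add: card_gt_0_iff)
    ultimately show ?thesis by linarith
  qed
  then show ?case using Suc.IH[OF Suc.prems(1) ne] by simp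
qed

lemma step_exists: "P 0 \<Longrightarrow> \<not> P n \<Longrightarrow> \<exists>k. P k \<and> \<not> P (Suc k)"
  by (induction n) auto

lemma in_some_level: assumes "finite S" "x \<in> S" shows "\<exists>k. x \<in> level S k"
proof -
  have "rest S (Suc (card S)) = {}"
  proof (rule ccontr)
    assume "rest S (Suc (card S)) \<noteq> {}"
    then have "card (rest S (Suc (card S))) + Suc (card S) \<le> card S" by (rule rest_card[OF assms(1)])
    then show False by linarith
  qed
  then have "x \<notin> rest S (Suc (card S))" by blast
  moreover have "x \<in> rest S 0" using assms by simp
  ultimately obtain k where "x \<in> rest S k" "x \<notin> rest S (Suc k)"
    using step_exists[of "\<lambda>k. x \<in> rest S k"] by blast
  then have "x \<in> level S k" by (simp add: level_def)
  then show ?thesis by blast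
qed

definition lv :: "'a::order set \<Rightarrow> 'a \<Rightarrow> nat" where
  "lv S x = (THE k. x \<in> level S k)"

lemma lv_eq: assumes "x \<in> level S k" shows "lv S x = k"
  unfolding lv_def
proof (rule the_equality)
  show "x \<in> level S k" by (fact assms)
next
  fix j assume "x \<in> level S j" then show "j = k" using assms level_disj by metis
qed

lemma lv_in: assumes "finite S" "x \<in> S" shows "x \<in> level S (lv S x)"
proof -
  obtain k where "x \<in> level S k" using in_some_level[OF assms] by blast
  then show ?thesis by (simp add: lv_eq)
qed

lemma level_iff: "finite S \<Longrightarrow> x \<in> level S k \<longleftrightarrow> x \<in> S \<and> lv S x = k"
  by (metis lv_in lv_eq level_sub subsetD)

lemma lv_mono: "finite S \<Longrightarrow> x \<in> S \<Longrightarrow> y \<in> S \<Longrightarrow> x < y \<Longrightarrow> lv S x < lv S y"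
  by (meson lv_in level_mono_lt)

lemma level_below:
  assumes "finite S" "x \<in> level S (Suc k)" shows "\<exists>y\<in>level S k. y < x"
proof -
  have "x \<in> rest S (Suc k)" using assms(2) by (simp add: level_def mins_def)
  then have xr: "x \<in> rest S k" "x \<notin> mins (rest S k)" by auto
  have fin: "finite (rest S k)" using assms(1) rest_sub finite_subset by blast
  let ?A = "{y \<in> rest S k. y < x}"
  have "?A \<noteq> {}" using xr unfolding mins_def by blast
  have finA: "finite ?A" using fin by simp
  obtain m where m: "m \<in> ?A" "\<forall>b\<in>?A. b \<le> m \<longrightarrow> m = b"
    using finite_has_minimal[OF finA \<open>?A \<noteq> {}\<close>] by blast
  have "\<forall>y\<in>rest S k. \<not> y < m"
  proof (intro ballI notI)
    fix y assume "y \<in> rest S k" "y < m"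
    then have "y \<in> ?A" using m(1) by auto
    have "y \<le> m" using \<open>y < m\<close> by simp
    then have "m = y" using m(2) \<open>y \<in> ?A\<close> by blast
    then show False using \<open>y < m\<close> by simp
  qed
  then have "m \<in> level S k" using m(1) by (simp add: level_def mins_def)
  then show ?thesis using m by auto
qed

lemma level_below_le:
  assumes "finite S" "x \<in> S" "j \<le> lv S x" shows "\<exists>y\<in>level S j. y \<le> x"
  using assms(3,2)
proof (induction "lv S x - j" arbitrary: j)
  case 0
  then have "j = lv S x" by simp
  then have "x \<in> level S j" using lv_in[OF assms(1) assms(2)] by simp
  then show ?case by blast
next
  case (Suc n)
  then have "n = lv S x - Suc j" "Suc j \<le> lv S x" by auto
  then obtain z where z: "z \<in> level S (Suc j)" "z \<le> x" using Suc by blast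
  then obtain y where "y \<in> level S j" "y < z" using level_below assms(1) by blast
  then have "y \<le> x" using z(2) by simp
  then show ?case using \<open>y \<in> level S j\<close> by blast
qed



lemma chain_of_level:
  assumes "finite S" "x \<in> level S j"
  shows "\<exists>C. C \<subseteq> S \<and> is_chain C \<and> card C = Suc j \<and> finite C \<and> (\<forall>z\<in>C. z \<le> x)"
  using assms(2)
proof (induction j arbitrary: x)
  case 0
  have "{x} \<subseteq> S" using 0 level_sub by blast
  moreover have "is_chain {x}" by (simp add: is_chain_def)
  ultimately show ?case by (intro exI[of _ "{x}"]) auto
next
  case (Suc j)
  obtain y where y: "y \<in> level S j" "y < x" using level_below[OF assms(1) Suc.prems] by blast
  obtain C where C: "C \<subseteq> S" "is_chain C" "card C = Suc j" "finite C" "\<forall>z\<in>C. z \<le> y"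
    using Suc.IH[OF y(1)] by blast
  have xC: "x \<notin> C" using C(5) y(2) by fastforce
  have le: "\<forall>z\<in>C. z \<le> x" using C(5) y(2) by fastforce
  have "is_chain (insert x C)" using C(2) le unfolding is_chain_def by blast
  moreover have "insert x C \<subseteq> S" using C(1) Suc.prems level_sub by blast
  moreover have "card (insert x C) = Suc (Suc j)" using C(3,4) xC by simp
  ultimately show ?case using C(4) le by (intro exI[of _ "insert x C"]) auto
qed

lemma chains_finite: "finite S \<Longrightarrow> finite {C. C \<subseteq> S \<and> is_chain C}"
  by (rule finite_subset[of _ "Pow S"]) auto

lemma level_le_height:
  assumes "finite S" "level S j \<noteq> {}" shows "j \<le> height S"
proof -
  obtain x where "x \<in> level S j" using assms(2) by blast
  then obtain C where C: "C \<subseteq> S" "is_chain C" "card C = Suc j"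
    using chain_of_level[OF assms(1)] by blast
  have "card C - 1 \<in> (\<lambda>C. card C - 1) ` {C. C \<subseteq> S \<and> is_chain C}" using C(1,2) by blast
  then have "card C - 1 \<le> height S" unfolding height_def
    using chains_finite[OF assms(1)] by simp
  then show ?thesis using C(3) by simp
qed

lemma chain_high:
  assumes "finite S" "C \<subseteq> S" "is_chain C" "C \<noteq> {}"
  shows "\<exists>z\<in>C. card C - 1 \<le> lv S z"
proof (rule ccontr)
  assume "\<not> ?thesis"
  then have sub: "lv S ` C \<subseteq> {..< card C - 1}" by force
  have fC: "finite C" using assms(1,2) finite_subset by blast
  have "inj_on (lv S) C"
  proof (rule inj_onI)
    fix z w assume zw: "z \<in> C" "w \<in> C" "lv S z = lv S w"
    show "z = w"
    proof (rule ccontr)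
      assume "z \<noteq> w"
      then have "z < w \<or> w < z" using assms(3) zw(1,2) unfolding is_chain_def by (auto simp: less_le)
      then show False using lv_mono[OF assms(1)] zw assms(2) by (metis less_irrefl subsetD)
    qed
  qed
  then have "card (lv S ` C) = card C" by (simp add: card_image)
  moreover have "card (lv S ` C) \<le> card C - 1" using card_mono[OF _ sub] by simp
  moreover have "card C > 0" using fC assms(4) by (simp add: card_gt_0_iff)
  ultimately show False by linarith
qed

lemma level_ne_down:
  assumes "finite S" "level S j' \<noteq> {}" "j \<le> j'" shows "level S j \<noteq> {}"
proof -
  obtain x where x: "x \<in> level S j'" using assms(2) by blast
  then have "x \<in> S" "lv S x = j'" using level_iff[OF assms(1)] by auto
  then show ?thesis using level_below_le[OF assms(1), of x j] assms(3) by auto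
qed

lemma level_ne_iff:
  assumes "finite S" "S \<noteq> {}" shows "level S j \<noteq> {} \<longleftrightarrow> j \<le> height S"
proof
  assume "level S j \<noteq> {}" then show "j \<le> height S" using level_le_height[OF assms(1)] by blast
next
  assume j: "j \<le> height S"
  let ?M = "(\<lambda>C. card C - 1) ` {C. C \<subseteq> S \<and> is_chain C}"
  have "{} \<in> {C. C \<subseteq> S \<and> is_chain C}" by (simp add: is_chain_def)
  then have "?M \<noteq> {}" by blast
  moreover have "finite ?M" using chains_finite[OF assms(1)] by simp
  ultimately have "height S \<in> ?M" unfolding height_def by (rule Max_in[rotated])
  then obtain C where C: "C \<subseteq> S" "is_chain C" "height S = card C - 1" by blast
  show "level S j \<noteq> {}"
  proof (cases "C = {}")
    case True
    obtain x where "x \<in> S" using assms(2) by blast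
    then have "level S (lv S x) \<noteq> {}" using lv_in[OF assms(1)] by blast
    moreover have "j = 0" using j C(3) True by simp
    ultimately show ?thesis using level_ne_down[OF assms(1)] by blast
  next
    case False
    then obtain z where z: "z \<in> C" "card C - 1 \<le> lv S z" using chain_high[OF assms(1) C(1,2)] by blast
    then have "level S (lv S z) \<noteq> {}" using lv_in[OF assms(1)] C(1) by blast
    then show ?thesis using level_ne_down[OF assms(1)] z(2) C(3) j by simp
  qed
qed

lemma lv_le_height: "finite S \<Longrightarrow> x \<in> S \<Longrightarrow> lv S x \<le> height S"
  using level_le_height lv_in by blast



lemma lt3: "(i::nat) < 3 \<longleftrightarrow> i = 0 \<or> i = 1 \<or> i = 2"
  by arith

lemma all3: "(\<forall>i<(3::nat). P i) = (P 0 \<and> P 1 \<and> P 2)"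
  unfolding lt3 by auto

lemma ex3: "(\<exists>i<(3::nat). P i) = (P 0 \<or> P 1 \<or> P 2)"
  unfolding lt3 by auto

lemma circ3:
  assumes "p 0 0" "p 1 1" "p 2 2" "p 0 1 \<Longrightarrow> p 1 2" "p 1 2 \<Longrightarrow> p 2 0" "p 2 0 \<Longrightarrow> p 0 1"
    "p 0 2 \<Longrightarrow> p 1 0" "p 1 0 \<Longrightarrow> p 2 1" "p 2 1 \<Longrightarrow> p 0 2"
    "\<not> (\<forall>i<(3::nat). \<forall>j<(3::nat). p i j)"
  shows "\<forall>j<(3::nat). \<exists>i<(3::nat). \<not> p i j"
    and "(\<forall>i<(3::nat). \<forall>j<(3::nat). p i j \<longleftrightarrow> i = j) \<or>
         (\<forall>j1<(3::nat). \<forall>j2<(3::nat). j1 \<noteq> j2 \<longrightarrow> (\<exists>i<(3::nat). p i j1 \<and> p i j2))"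
  using assms unfolding all3 ex3 by auto

lemma antichain_height0:
  assumes "finite S" "S \<noteq> {}" "is_antichain S" shows "height S = 0"
proof (rule ccontr)
  assume "height S \<noteq> 0"
  then have "level S 1 \<noteq> {}" using level_ne_iff[OF assms(1,2)] by simp
  then obtain x where "x \<in> level S (Suc 0)" by auto
  then obtain y where "y \<in> level S 0" "y < x" using level_below[OF assms(1)] by blast
  then show False using assms(3) \<open>x \<in> level S (Suc 0)\<close> level_sub unfolding is_antichain_def
    by (metis less_le subsetD)
qed

lemma section_rows:
  assumes fin: "finite S" and sec: "is_section S" and h1: "1 \<le> height S"
  obtains c :: "nat \<Rightarrow> nat \<Rightarrow> 'a::order" where
    "inj_on (\<lambda>(k, j). c k j) ({0..height S} \<times> {0..<3})"
    "S = (\<lambda>(k, j). c k j) ` ({0..height S} \<times> {0..<3})"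
    "\<forall>j<3. \<forall>k<height S. c k j < c (Suc k) j"
    "\<forall>k\<le>height S. \<forall>l\<le>height S. \<forall>i<3. \<forall>j<3.
            c k i < c l j \<longrightarrow> c k ((i + 1) mod 3) < c l ((j + 1) mod 3)"
    "\<not> (\<exists>k. set_less (level S k) (level S (Suc k)) \<and> card (level S k) = 3 \<and> card (level S (Suc k)) = 3)"
    "\<forall>m\<le>height S. level S m = {c m 0, c m 1, c m 2}"
    "\<forall>m\<le>height S. \<forall>j<3. lv S (c m j) = m"
proof -
  have "\<not> (card S = 2 \<and> is_antichain S)"
  proof
    assume a: "card S = 2 \<and> is_antichain S"
    then have "S \<noteq> {}" by auto
    then show False using antichain_height0[OF fin] a h1 by simp
  qed
  then obtain c :: "nat \<Rightarrow> nat \<Rightarrow> 'a" where c: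
    "inj_on (\<lambda>(k, j). c k j) ({0..height S} \<times> {0..<3})"
    "S = (\<lambda>(k, j). c k j) ` ({0..height S} \<times> {0..<3})"
    "\<forall>j<3. \<forall>k<height S. c k j < c (Suc k) j"
    "\<forall>k\<le>height S. \<forall>l\<le>height S. \<forall>i<3. \<forall>j<3.
            c k i < c l j \<longrightarrow> c k ((i + 1) mod 3) < c l ((j + 1) mod 3)"
    "\<not> (\<exists>k. set_less (level S k) (level S (Suc k)) \<and> card (level S k) = 3 \<and> card (level S (Suc k)) = 3)"
    using sec unfolding is_section_def by blast
  have inS: "c m j \<in> S" if "m \<le> height S" "j < 3" for m j
    using that c(2) by force
  have ne: "S \<noteq> {}" using inS[of 0 0] by auto
  have grow: "lv S (c m j) + (n - m) \<le> lv S (c n j)" if "n \<le> height S" "m \<le> n" "j < 3" for m n j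
    using that
  proof (induction n)
    case 0 then show ?case by simp
  next
    case (Suc n)
    show ?case
    proof (cases "m = Suc n")
      case True then show ?thesis by simp
    next
      case False
      then have "m \<le> n" using Suc.prems by simp
      then have "lv S (c m j) + (n - m) \<le> lv S (c n j)" using Suc by simp
      moreover have "lv S (c n j) < lv S (c (Suc n) j)"
        using lv_mono[OF fin inS inS] c(3) Suc.prems by simp
      ultimately show ?thesis using \<open>m \<le> n\<close> by simp
    qed
  qed
  have lvc: "\<forall>m\<le>height S. \<forall>j<3. lv S (c m j) = m"
  proof (intro allI impI)
    fix m j assume mj: "m \<le> height S" "j < (3::nat)"
    have "lv S (c 0 j) + (m - 0) \<le> lv S (c m j)" using grow[of m 0 j] mj by simp
    moreover have "lv S (c m j) + (height S - m) \<le> lv S (c (height S) j)" using grow[of "height S" m j] mj by simp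
    moreover have "lv S (c (height S) j) \<le> height S" using lv_le_height[OF fin inS] mj by simp
    ultimately show "lv S (c m j) = m" using mj by linarith
  qed
  have lev: "\<forall>m\<le>height S. level S m = {c m 0, c m 1, c m 2}"
  proof (intro allI impI)
    fix m assume m: "m \<le> height S"
    show "level S m = {c m 0, c m 1, c m 2}"
    proof
      show "{c m 0, c m 1, c m 2} \<subseteq> level S m"
        using lvc m inS level_iff[OF fin] by simp
    next
      show "level S m \<subseteq> {c m 0, c m 1, c m 2}"
      proof
        fix x assume x: "x \<in> level S m"
        then have "x \<in> S" using level_sub by blast
        then have "x \<in> (\<lambda>(k, j). c k j) ` ({0..height S} \<times> {0..<3})" using c(2) by simp
        then obtain p where p: "p \<in> {0..height S} \<times> {0..<3}" "x = (\<lambda>(k, j). c k j) p" by blast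
        obtain m' j where "p = (m', j)" by (cases p)
        then have mj: "m' \<le> height S" "j < 3" "x = c m' j" using p by auto
        then have "lv S x = m'" using lvc by simp
        moreover have "lv S x = m" using x lv_eq by blast
        ultimately show "x \<in> {c m 0, c m 1, c m 2}" using mj
          unfolding lt3 by auto
      qed
    qed
  qed
  show ?thesis using that[OF c lev lvc] .
qed



lemma mem3: "y \<in> {f 0, f 1, f 2} \<Longrightarrow> \<exists>j<(3::nat). y = f j"
  unfolding ex3 by auto

lemma row_facts:
  fixes c :: "nat \<Rightarrow> nat \<Rightarrow> 'a::order"
  assumes inj: "inj_on (\<lambda>(k, j). c k j) ({0..h} \<times> {0..<3})"
    and chn: "\<forall>j<3. \<forall>k<h. c k j < c (Suc k) j"
    and rot: "\<forall>k\<le>h. \<forall>l\<le>h. \<forall>i<3. \<forall>j<3.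
            c k i < c l j \<longrightarrow> c k ((i + 1) mod 3) < c l ((j + 1) mod 3)"
    and nc: "\<not> (\<exists>k. set_less (level S k) (level S (Suc k)) \<and> card (level S k) = 3 \<and> card (level S (Suc k)) = 3)"
    and lev: "\<forall>m\<le>h. level S m = {c m 0, c m 1, c m 2}"
    and m: "m < h"
  shows "\<forall>y\<in>level S (Suc m). \<exists>x\<in>level S m. \<not> x < y"
    and "(\<forall>i<3. \<forall>j<3. c m i < c (Suc m) j \<longleftrightarrow> i = j) \<or>
         (\<forall>y1\<in>level S (Suc m). \<forall>y2\<in>level S (Suc m). y1 \<noteq> y2 \<longrightarrow> (\<exists>x\<in>level S m. x < y1 \<and> x < y2))"
proof -
  have dist: "c n i \<noteq> c n j" if "n \<le> h" "i < 3" "j < 3" "i \<noteq> j" for n i j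
    using inj that unfolding inj_on_def by auto
  have card3: "card (level S n) = 3" if "n \<le> h" for n
    using lev that dist[of n 0 1] dist[of n 0 2] dist[of n 1 2] by simp
  define p where "p i j = (c m i < c (Suc m) j)" for i j
  have rot': "p i j \<Longrightarrow> p ((i + 1) mod 3) ((j + 1) mod 3)" if "i < 3" "j < 3" for i j
    using rot m that unfolding p_def by (metis Suc_leI less_imp_le)
  have A: "p 0 0" "p 1 1" "p 2 2" using chn m unfolding p_def by auto
  have B: "p 0 1 \<Longrightarrow> p 1 2" "p 1 2 \<Longrightarrow> p 2 0" "p 2 0 \<Longrightarrow> p 0 1"
    "p 0 2 \<Longrightarrow> p 1 0" "p 1 0 \<Longrightarrow> p 2 1" "p 2 1 \<Longrightarrow> p 0 2"
  proof -
    have e: "(0 + 1) mod 3 = (1::nat)" "(1 + 1) mod 3 = (2::nat)" "(2 + 1) mod 3 = (0::nat)" by simp_all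
    show "p 0 1 \<Longrightarrow> p 1 2" using rot'[of 0 1] unfolding e by simp
    show "p 1 2 \<Longrightarrow> p 2 0" using rot'[of 1 2] unfolding e by simp
    show "p 2 0 \<Longrightarrow> p 0 1" using rot'[of 2 0] unfolding e by simp
    show "p 0 2 \<Longrightarrow> p 1 0" using rot'[of 0 2] unfolding e by simp
    show "p 1 0 \<Longrightarrow> p 2 1" using rot'[of 1 0] unfolding e by simp
    show "p 2 1 \<Longrightarrow> p 0 2" using rot'[of 2 1] unfolding e by simp
  qed
  have C: "\<not> (\<forall>i<(3::nat). \<forall>j<(3::nat). p i j)"
  proof
    assume all: "\<forall>i<(3::nat). \<forall>j<(3::nat). p i j"
    have "set_less (level S m) (level S (Suc m))"
      using all lev m unfolding set_less_def p_def all3 by simp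
    then show False using nc card3[of m] card3[of "Suc m"] m by auto
  qed
  note cc = circ3[of p, OF A B C]
  show "\<forall>y\<in>level S (Suc m). \<exists>x\<in>level S m. \<not> x < y"
  proof
    fix y assume "y \<in> level S (Suc m)"
    then have "y \<in> {c (Suc m) 0, c (Suc m) 1, c (Suc m) 2}" using lev m by simp
    then obtain j where j: "j < 3" "y = c (Suc m) j" using mem3 by metis
    then obtain i where "i < 3" "\<not> p i j" using cc(1) by blast
    then show "\<exists>x\<in>level S m. \<not> x < y" using j lev m unfolding p_def ex3 lt3 by auto
  qed
  show "(\<forall>i<3. \<forall>j<3. c m i < c (Suc m) j \<longleftrightarrow> i = j) \<or>
         (\<forall>y1\<in>level S (Suc m). \<forall>y2\<in>level S (Suc m). y1 \<noteq> y2 \<longrightarrow> (\<exists>x\<in>level S m. x < y1 \<and> x < y2))"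
  proof (cases "\<forall>i<3. \<forall>j<3. c m i < c (Suc m) j \<longleftrightarrow> i = j")
    case True then show ?thesis by blast
  next
    case False
    then have cr: "\<forall>j1<(3::nat). \<forall>j2<(3::nat). j1 \<noteq> j2 \<longrightarrow> (\<exists>i<(3::nat). p i j1 \<and> p i j2)"
      using cc(2) unfolding p_def by blast
    have "\<forall>y1\<in>level S (Suc m). \<forall>y2\<in>level S (Suc m). y1 \<noteq> y2 \<longrightarrow> (\<exists>x\<in>level S m. x < y1 \<and> x < y2)"
    proof (intro ballI impI)
      fix y1 y2 assume y: "y1 \<in> level S (Suc m)" "y2 \<in> level S (Suc m)" "y1 \<noteq> y2"
      have "y1 \<in> {c (Suc m) 0, c (Suc m) 1, c (Suc m) 2}" using y(1) lev m by simp
      then obtain j1 where j1: "j1 < 3" "y1 = c (Suc m) j1" using mem3 by metis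
      have "y2 \<in> {c (Suc m) 0, c (Suc m) 1, c (Suc m) 2}" using y(2) lev m by simp
      then obtain j2 where j2: "j2 < 3" "y2 = c (Suc m) j2" using mem3 by metis
      have "j1 \<noteq> j2" using j1 j2 y(3) by auto
      then obtain i where "i < 3" "p i j1" "p i j2" using cr j1(1) j2(1) by blast
      then show "\<exists>x\<in>level S m. x < y1 \<and> x < y2" using j1 j2 lev m unfolding p_def lt3 by auto
    qed
    then show ?thesis by blast
  qed
qed



lemma char_lv:
  fixes f :: "'a::order \<Rightarrow> nat"
  assumes fin: "finite S"
    and mono: "\<And>x y. x \<in> S \<Longrightarrow> y \<in> S \<Longrightarrow> x < y \<Longrightarrow> f x < f y"
    and down: "\<And>x j. x \<in> S \<Longrightarrow> f x = Suc j \<Longrightarrow> \<exists>y\<in>S. y < x \<and> f y = j"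
  shows "x \<in> S \<Longrightarrow> lv S x = f x"
proof (induction "f x" arbitrary: x rule: less_induct)
  case less
  show ?case
  proof (rule antisym)
    show "lv S x \<le> f x"
    proof (cases "lv S x")
      case 0 then show ?thesis by simp
    next
      case (Suc j)
      then have "x \<in> level S (Suc j)" using lv_in[OF fin less.prems] by simp
      then obtain y where y: "y \<in> level S j" "y < x" using level_below[OF fin] by blast
      have yS: "y \<in> S" using y(1) level_sub by blast
      have "f y < f x" using mono[OF yS less.prems y(2)] .
      then have "lv S y = f y" using less.hyps yS by blast
      moreover have "lv S y = j" using y(1) lv_eq by blast
      ultimately show ?thesis using Suc \<open>f y < f x\<close> by simp
    qed
  next
    show "f x \<le> lv S x"
    proof (cases "f x")
      case 0 then show ?thesis by simp
    next
      case (Suc j)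
      then obtain y where y: "y \<in> S" "y < x" "f y = j" using down[OF less.prems] by blast
      then have "lv S y = f y" using less.hyps Suc by simp
      moreover have "lv S y < lv S x" using lv_mono[OF fin y(1) less.prems y(2)] .
      ultimately show ?thesis using Suc y(3) by simp
    qed
  qed
qed

locale tower =
  fixes Qs :: "'a::order set list" and R :: "'a set"
  assumes ne: "Qs \<noteq> []" and Ru: "R = \<Union>(set Qs)"
    and secs: "\<And>i. i < length Qs \<Longrightarrow> is_section (Qs ! i) \<and> is_nice (Qs ! i)"
    and ord: "\<And>i j. i < j \<Longrightarrow> j < length Qs \<Longrightarrow> set_less (Qs ! i) (Qs ! j)"
    and finR: "finite R"
begin

definition N :: "nat \<Rightarrow> nat" where "N i = (\<Sum>j<i. height (Qs ! j) + 1)"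

lemma blk_sub: "i < length Qs \<Longrightarrow> Qs ! i \<subseteq> R"
  using Ru by auto

lemma blk_fin: "i < length Qs \<Longrightarrow> finite (Qs ! i)"
  using blk_sub finR finite_subset by blast

lemma blk_ne: assumes "i < length Qs" shows "Qs ! i \<noteq> {}"
proof
  assume e: "Qs ! i = {}"
  have "height ({}::'a set) = 0" unfolding height_def is_chain_def by simp
  then show False using secs[OF assms] e unfolding is_section_def by simp
qed

lemma blk_unique: "i < length Qs \<Longrightarrow> j < length Qs \<Longrightarrow> x \<in> Qs ! i \<Longrightarrow> x \<in> Qs ! j \<Longrightarrow> i = j"
  using ord unfolding set_less_def by (metis less_irrefl linorder_neq_iff)

lemma in_blk: "x \<in> R \<Longrightarrow> \<exists>i<length Qs. x \<in> Qs ! i"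
  using Ru by (auto simp: in_set_conv_nth)

lemma N_gap: assumes "i < j" shows "N i + height (Qs ! i) + 1 \<le> N j"
proof -
  have "N (Suc i) = N i + height (Qs ! i) + 1" unfolding N_def by simp
  moreover have "N (Suc i) \<le> N j" unfolding N_def
    by (rule sum_mono2) (use assms in auto)
  ultimately show ?thesis by simp
qed

lemma lvQ_le: "i < length Qs \<Longrightarrow> x \<in> Qs ! i \<Longrightarrow> lv (Qs ! i) x \<le> height (Qs ! i)"
  using lv_le_height blk_fin by blast

lemma lvR: assumes "i < length Qs" "x \<in> Qs ! i" shows "lv R x = N i + lv (Qs ! i) x"
proof -
  define blk where "blk y = (THE i. i < length Qs \<and> y \<in> Qs ! i)" for y
  have blk_eq: "blk y = i" if "i < length Qs" "y \<in> Qs ! i" for y i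
    unfolding blk_def
  proof (rule the_equality)
    show "i < length Qs \<and> y \<in> Qs ! i" using that by simp
  next
    fix j assume "j < length Qs \<and> y \<in> Qs ! j"
    then show "j = i" using blk_unique that by blast
  qed
  define f where "f y = N (blk y) + lv (Qs ! blk y) y" for y
  have f_eq: "f y = N i + lv (Qs ! i) y" if "i < length Qs" "y \<in> Qs ! i" for y i
    unfolding f_def using blk_eq[OF that] by simp
  have "lv R x = f x"
  proof (rule char_lv[OF finR])
    fix x y assume xy: "x \<in> R" "y \<in> R" "x < y"
    obtain i where i: "i < length Qs" "x \<in> Qs ! i" using in_blk xy(1) by blast
    obtain j where j: "j < length Qs" "y \<in> Qs ! j" using in_blk xy(2) by blast
    consider "i = j" | "i < j" | "j < i" by arith
    then show "f x < f y"
    proof cases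
      case 1
      then show ?thesis using f_eq i j lv_mono[OF blk_fin[OF i(1)] i(2) _ xy(3)] by simp
    next
      case 2
      have "N i + height (Qs ! i) + 1 \<le> N j" using N_gap[OF 2] .
      moreover have "lv (Qs ! i) x \<le> height (Qs ! i)" using lvQ_le i by blast
      ultimately show ?thesis using f_eq i j by fastforce
    next
      case 3
      then have "y < x" using ord[OF 3 i(1)] i j unfolding set_less_def by blast
      then show ?thesis using xy(3) by simp
    qed
  next
    fix x j assume xj: "x \<in> R" "f x = Suc j"
    obtain i where i: "i < length Qs" "x \<in> Qs ! i" using in_blk xj(1) by blast
    have fi: "finite (Qs ! i)" using blk_fin i(1) .
    show "\<exists>y\<in>R. y < x \<and> f y = j"
    proof (cases "lv (Qs ! i) x")
      case (Suc t)
      then have "x \<in> level (Qs ! i) (Suc t)" using lv_in[OF fi i(2)] by simp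
      then obtain y where y: "y \<in> level (Qs ! i) t" "y < x" using level_below[OF fi] by blast
      have yQ: "y \<in> Qs ! i" using y(1) level_sub by blast
      have "f y = N i + t" using f_eq[OF i(1) yQ] lv_eq[OF y(1)] by simp
      moreover have "f x = N i + Suc t" using f_eq[OF i] Suc by simp
      ultimately show ?thesis using y(2) yQ blk_sub[OF i(1)] xj(2) by auto
    next
      case 0
      then have "N i = Suc j" using f_eq[OF i] xj(2) by simp
      then have "i \<noteq> 0" unfolding N_def by (cases i) auto
      then obtain i' where i': "i = Suc i'" by (cases i) auto
      have i'l: "i' < length Qs" using i' i(1) by simp
      have fi': "finite (Qs ! i')" using blk_fin i'l .
      have "level (Qs ! i') (height (Qs ! i')) \<noteq> {}"
        using level_ne_iff[OF fi' blk_ne[OF i'l]] by simp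
      then obtain y where y: "y \<in> level (Qs ! i') (height (Qs ! i'))" by blast
      have yQ: "y \<in> Qs ! i'" using y level_sub by blast
      have "y < x" using ord[of i' i] i' i(1) yQ i(2) unfolding set_less_def by blast
      moreover have "f y = N i' + height (Qs ! i')" using f_eq[OF i'l yQ] lv_eq[OF y] by simp
      moreover have "N i = N i' + height (Qs ! i') + 1" unfolding N_def i' by simp
      ultimately show ?thesis using \<open>N i = Suc j\<close> yQ blk_sub[OF i'l] by auto
    qed
  next
    show "x \<in> R" using assms blk_sub by blast
  qed
  then show ?thesis using f_eq[OF assms] by simp
qed

lemma level_blk:
  assumes "i < length Qs" "x \<in> Qs ! i"
  shows "level R (lv R x) = level (Qs ! i) (lv (Qs ! i) x)"
proof
  have fi: "finite (Qs ! i)" using blk_fin assms(1) .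
  show "level (Qs ! i) (lv (Qs ! i) x) \<subseteq> level R (lv R x)"
  proof
    fix y assume y: "y \<in> level (Qs ! i) (lv (Qs ! i) x)"
    then have yQ: "y \<in> Qs ! i" "lv (Qs ! i) y = lv (Qs ! i) x" using level_iff[OF fi] by auto
    then have "lv R y = lv R x" using lvR[OF assms(1)] assms(2) by simp
    then show "y \<in> level R (lv R x)" using level_iff[OF finR] yQ(1) blk_sub[OF assms(1)] by blast
  qed
next
  have fi: "finite (Qs ! i)" using blk_fin assms(1) .
  show "level R (lv R x) \<subseteq> level (Qs ! i) (lv (Qs ! i) x)"
  proof
    fix y assume y: "y \<in> level R (lv R x)"
    then have yR: "y \<in> R" "lv R y = lv R x" using level_iff[OF finR] by auto
    obtain j where j: "j < length Qs" "y \<in> Qs ! j" using in_blk yR(1) by blast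
    have eq: "N j + lv (Qs ! j) y = N i + lv (Qs ! i) x"
      using yR(2) lvR[OF j] lvR[OF assms] by simp
    have "j = i"
    proof (rule ccontr)
      assume "j \<noteq> i"
      then consider "i < j" | "j < i" by arith
      then show False
      proof cases
        case 1
        then show False using N_gap[OF 1] lvQ_le[OF assms] eq by simp
      next
        case 2
        then show False using N_gap[OF 2] lvQ_le[OF j] eq by simp
      qed
    qed
    then have "lv (Qs ! i) y = lv (Qs ! i) x" using eq by simp
    then show "y \<in> level (Qs ! i) (lv (Qs ! i) x)" using level_iff[OF fi] j \<open>j = i\<close> by blast
  qed
qed

end



lemma inj_dist:
  fixes c :: "nat \<Rightarrow> nat \<Rightarrow> 'a" and n h i j :: nat
  assumes "inj_on (\<lambda>(k, j). c k j) ({0..h} \<times> {0..<3::nat})" "n \<le> h" "i < 3" "j < 3" "i \<noteq> j"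
  shows "c n i \<noteq> c n j"
proof
  assume eq: "c n i = c n j"
  have "(n, i) = (n, j)"
    by (rule inj_onD[OF assms(1)]) (use eq assms(2-4) in auto)
  then show False using assms(5) by simp
qed

context tower begin

lemma level_two:
  assumes "level R j \<noteq> {}" shows "\<exists>a\<in>level R j. \<exists>b\<in>level R j. a \<noteq> b"
proof -
  obtain x where x: "x \<in> level R j" using assms by blast
  then have xR: "x \<in> R" "lv R x = j" using level_iff[OF finR] by auto
  obtain i where i: "i < length Qs" "x \<in> Qs ! i" using in_blk xR(1) by blast
  have fi: "finite (Qs ! i)" using blk_fin i(1) .
  have eq: "level R j = level (Qs ! i) (lv (Qs ! i) x)" using level_blk[OF i] xR(2) by simp
  have sec: "is_section (Qs ! i)" using secs[OF i(1)] by blast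
  show ?thesis
  proof (cases "card (Qs ! i) = 2 \<and> is_antichain (Qs ! i)")
    case True
    then have h0: "height (Qs ! i) = 0" using antichain_height0[OF fi blk_ne[OF i(1)]] by simp
    have all0: "level (Qs ! i) 0 = Qs ! i"
    proof
      show "level (Qs ! i) 0 \<subseteq> Qs ! i" using level_sub by blast
      show "Qs ! i \<subseteq> level (Qs ! i) 0"
      proof
        fix y assume y: "y \<in> Qs ! i"
        then have "lv (Qs ! i) y = 0" using lvQ_le[OF i(1) y] h0 by simp
        then show "y \<in> level (Qs ! i) 0" using lv_in[OF fi y] by simp
      qed
    qed
    have "lv (Qs ! i) x = 0" using lvQ_le[OF i] h0 by simp
    then have "level R j = Qs ! i" using eq all0 by simp
    moreover obtain a b where "Qs ! i = {a, b}" "a \<noteq> b" using True card_2_iff by metis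
    ultimately show ?thesis by auto
  next
    case False
    then have h1: "1 \<le> height (Qs ! i)" using sec unfolding is_section_def by blast
    obtain c :: "nat \<Rightarrow> nat \<Rightarrow> 'a" where c:
      "inj_on (\<lambda>(k, j). c k j) ({0..height (Qs ! i)} \<times> {0..<3})"
      "(Qs ! i) = (\<lambda>(k, j). c k j) ` ({0..height (Qs ! i)} \<times> {0..<3})"
      "\<forall>j<3. \<forall>k<height (Qs ! i). c k j < c (Suc k) j"
      "\<forall>k\<le>height (Qs ! i). \<forall>l\<le>height (Qs ! i). \<forall>i<3. \<forall>j<3.
            c k i < c l j \<longrightarrow> c k ((i + 1) mod 3) < c l ((j + 1) mod 3)"
      "\<not> (\<exists>k. set_less (level (Qs ! i) k) (level (Qs ! i) (Suc k)) \<and> card (level (Qs ! i) k) = 3 \<and> card (level (Qs ! i) (Suc k)) = 3)"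
      "\<forall>m\<le>height (Qs ! i). level (Qs ! i) m = {c m 0, c m 1, c m 2}"
      "\<forall>m\<le>height (Qs ! i). \<forall>j<3. lv (Qs ! i) (c m j) = m"
      by (rule section_rows[OF fi sec h1])
    have m: "lv (Qs ! i) x \<le> height (Qs ! i)" using lvQ_le[OF i] .
    have "c (lv (Qs ! i) x) 0 \<noteq> c (lv (Qs ! i) x) 1" using inj_dist[OF c(1) m] by simp
    then show ?thesis using eq c(6) m by auto
  qed
qed

lemma level_top:
  assumes c3: "card (level R l) = 3" and sl: "set_less (level R l) (level R (Suc l))"
    and ne: "level R (Suc l) \<noteq> {}"
  shows "1 \<le> l \<and> (\<forall>a\<in>level R l. \<exists>u\<in>level R (l - 1). \<not> u \<le> a)"
proof -
  have "level R l \<noteq> {}" using c3 by auto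
  then obtain x where x: "x \<in> level R l" by blast
  then have xR: "x \<in> R" "lv R x = l" using level_iff[OF finR] by auto
  obtain i where i: "i < length Qs" "x \<in> Qs ! i" using in_blk xR(1) by blast
  have fi: "finite (Qs ! i)" using blk_fin i(1) .
  have eq: "level R l = level (Qs ! i) (lv (Qs ! i) x)" using level_blk[OF i] xR(2) by simp
  have lvx: "l = N i + lv (Qs ! i) x" using lvR[OF i] xR(2) by simp
  have sec: "is_section (Qs ! i)" using secs[OF i(1)] by blast
  have mh: "lv (Qs ! i) x \<le> height (Qs ! i)" using lvQ_le[OF i] .
  have not2: "\<not> (card (Qs ! i) = 2 \<and> is_antichain (Qs ! i))"
  proof
    assume a: "card (Qs ! i) = 2 \<and> is_antichain (Qs ! i)"
    have "level (Qs ! i) (lv (Qs ! i) x) \<subseteq> Qs ! i" using level_sub by blast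
    then have "card (level (Qs ! i) (lv (Qs ! i) x)) \<le> card (Qs ! i)" by (rule card_mono[OF fi])
    then have "card (level (Qs ! i) (lv (Qs ! i) x)) \<le> 2" using a by simp
    then show False using c3 eq by simp
  qed
  then have h1: "1 \<le> height (Qs ! i)" using sec unfolding is_section_def by blast
  obtain c :: "nat \<Rightarrow> nat \<Rightarrow> 'a" where c:
    "inj_on (\<lambda>(k, j). c k j) ({0..height (Qs ! i)} \<times> {0..<3})"
    "(Qs ! i) = (\<lambda>(k, j). c k j) ` ({0..height (Qs ! i)} \<times> {0..<3})"
    "\<forall>j<3. \<forall>k<height (Qs ! i). c k j < c (Suc k) j"
    "\<forall>k\<le>height (Qs ! i). \<forall>l\<le>height (Qs ! i). \<forall>i<3. \<forall>j<3.
            c k i < c l j \<longrightarrow> c k ((i + 1) mod 3) < c l ((j + 1) mod 3)"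
    "\<not> (\<exists>k. set_less (level (Qs ! i) k) (level (Qs ! i) (Suc k)) \<and> card (level (Qs ! i) k) = 3 \<and> card (level (Qs ! i) (Suc k)) = 3)"
    "\<forall>m\<le>height (Qs ! i). level (Qs ! i) m = {c m 0, c m 1, c m 2}"
    "\<forall>m\<le>height (Qs ! i). \<forall>j<3. lv (Qs ! i) (c m j) = m"
    by (rule section_rows[OF fi sec h1])
  have card3: "card (level (Qs ! i) n) = 3" if "n \<le> height (Qs ! i)" for n
    using c(6) that inj_dist[OF c(1) that, of 0 1] inj_dist[OF c(1) that, of 0 2]
      inj_dist[OF c(1) that, of 1 2] by simp
  have lvl: "level R (N i + n) = level (Qs ! i) n" if "n \<le> height (Qs ! i)" for n
  proof -
    have "level (Qs ! i) n \<noteq> {}" using level_ne_iff[OF fi blk_ne[OF i(1)]] that by blast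
    then obtain y where y: "y \<in> level (Qs ! i) n" by blast
    then have yQ: "y \<in> Qs ! i" "lv (Qs ! i) y = n" using level_iff[OF fi] by auto
    then have "lv R y = N i + n" using lvR[OF i(1)] by simp
    then show ?thesis using level_blk[OF i(1), of y] yQ by simp
  qed
  have mtop: "lv (Qs ! i) x = height (Qs ! i)"
  proof (rule ccontr)
    assume "lv (Qs ! i) x \<noteq> height (Qs ! i)"
    then have sm: "Suc (lv (Qs ! i) x) \<le> height (Qs ! i)" using mh by simp
    then have "level R (N i + Suc (lv (Qs ! i) x)) = level (Qs ! i) (Suc (lv (Qs ! i) x))" by (rule lvl)
    then have "level R (Suc l) = level (Qs ! i) (Suc (lv (Qs ! i) x))" using lvx by simp
    then have "set_less (level (Qs ! i) (lv (Qs ! i) x)) (level (Qs ! i) (Suc (lv (Qs ! i) x)))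
      \<and> card (level (Qs ! i) (lv (Qs ! i) x)) = 3 \<and> card (level (Qs ! i) (Suc (lv (Qs ! i) x))) = 3"
      using sl eq card3[OF sm] card3[OF mh] by simp
    then show False using c(5) by blast
  qed
  have l1: "1 \<le> l" using lvx mtop h1 by simp
  have prev: "level R (l - 1) = level (Qs ! i) (height (Qs ! i) - 1)"
    using lvl[of "height (Qs ! i) - 1"] lvx mtop h1 by simp
  have hm: "height (Qs ! i) - 1 < height (Qs ! i)" using h1 by simp
  note rf = row_facts[OF c(1) c(3) c(4) c(5) c(6) hm]
  have top: "level R l = level (Qs ! i) (Suc (height (Qs ! i) - 1))" using eq mtop h1 by simp
  have "\<forall>a\<in>level R l. \<exists>u\<in>level R (l - 1). \<not> u \<le> a"
  proof
    fix a assume a: "a \<in> level R l"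
    then have a': "a \<in> level (Qs ! i) (Suc (height (Qs ! i) - 1))" using top by simp
    then obtain u where u: "u \<in> level (Qs ! i) (height (Qs ! i) - 1)" "\<not> u < a" using rf(1) by blast
    have "u \<noteq> a"
    proof
      assume "u = a"
      then have "u \<in> level (Qs ! i) (Suc (height (Qs ! i) - 1))" using a' by simp
      from level_disj[OF u(1) this] show False by simp
    qed
    then have "\<not> u \<le> a" using u(2) by (simp add: less_le)
    then show "\<exists>u\<in>level R (l - 1). \<not> u \<le> a" using u(1) prev by blast
  qed
  then show ?thesis using l1 by blast
qed

end



lemma type3C_uniq:
  assumes "type_3C S" "x \<in> S" "y \<in> S" "z \<in> S" "x < z" "y < z"
  shows "x = y"
proof -
  from assms(1)[unfolded type_3C_def] obtain a0 a1 a2 b0 b1 b2 where t0: "S = {a0, a1, a2, b0, b1, b2} \<and> card S = 6 \<and>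
    (\<forall>x\<in>S. \<forall>y\<in>S. x < y \<longleftrightarrow> ((x = a0 \<and> y = b0) \<or> (x = a1 \<and> y = b1) \<or> (x = a2 \<and> y = b2)))"
    by (elim exE)
  note t = t0[THEN conjunct1] t0[THEN conjunct2, THEN conjunct1] t0[THEN conjunct2, THEN conjunct2]
  have "card (set [a0, a1, a2, b0, b1, b2]) = length [a0, a1, a2, b0, b1, b2]" using t(1,2) by simp
  then have d: "distinct [a0, a1, a2, b0, b1, b2]" by (rule card_distinct)
  have 1: "(x = a0 \<and> z = b0) \<or> (x = a1 \<and> z = b1) \<or> (x = a2 \<and> z = b2)"
    using t(3)[rule_format, OF assms(2) assms(4)] assms(5) by blast
  have 2: "(y = a0 \<and> z = b0) \<or> (y = a1 \<and> z = b1) \<or> (y = a2 \<and> z = b2)"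
    using t(3)[rule_format, OF assms(3) assms(4)] assms(6) by blast
  show ?thesis using 1 2 d by (elim disjE conjE) auto
qed

lemma type3C_intro:
  fixes a0 a1 a2 b0 b1 b2 :: "'a::order"
  assumes d: "distinct [a0, a1, a2, b0, b1, b2]"
    and r: "a0 < b0" "a1 < b1" "a2 < b2" "\<not> a0 < b1" "\<not> a0 < b2" "\<not> a1 < b0" "\<not> a1 < b2"
      "\<not> a2 < b0" "\<not> a2 < b1"
    and aa: "\<forall>x\<in>{a0, a1, a2}. \<forall>y\<in>{a0, a1, a2}. \<not> x < y"
    and bb: "\<forall>x\<in>{b0, b1, b2}. \<forall>y\<in>{b0, b1, b2}. \<not> x < y"
    and ba: "\<forall>x\<in>{b0, b1, b2}. \<forall>y\<in>{a0, a1, a2}. \<not> x < y"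
  shows "type_3C {a0, a1, a2, b0, b1, b2}"
  unfolding type_3C_def
proof (intro exI conjI)
  show "{a0, a1, a2, b0, b1, b2} = {a0, a1, a2, b0, b1, b2}" ..
  have "card (set [a0, a1, a2, b0, b1, b2]) = 6" using distinct_card[OF d] by simp
  then show "card {a0, a1, a2, b0, b1, b2} = 6" by simp
  show "\<forall>x\<in>{a0, a1, a2, b0, b1, b2}. \<forall>y\<in>{a0, a1, a2, b0, b1, b2}.
    x < y \<longleftrightarrow> ((x = a0 \<and> y = b0) \<or> (x = a1 \<and> y = b1) \<or> (x = a2 \<and> y = b2))"
  proof (intro ballI)
    fix x y assume x: "x \<in> {a0, a1, a2, b0, b1, b2}" and y: "y \<in> {a0, a1, a2, b0, b1, b2}"
    show "x < y \<longleftrightarrow> ((x = a0 \<and> y = b0) \<or> (x = a1 \<and> y = b1) \<or> (x = a2 \<and> y = b2))"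
    proof
      assume xy: "x < y"
      have xa: "x \<in> {a0, a1, a2}"
      proof (rule ccontr)
        assume "x \<notin> {a0, a1, a2}"
        then have "x \<in> {b0, b1, b2}" using x by blast
        moreover have "y \<in> {a0, a1, a2} \<or> y \<in> {b0, b1, b2}" using y by blast
        ultimately show False using bb ba xy by blast
      qed
      have yb: "y \<in> {b0, b1, b2}"
      proof (rule ccontr)
        assume "y \<notin> {b0, b1, b2}"
        then have "y \<in> {a0, a1, a2}" using y by blast
        then show False using aa xa xy by blast
      qed
      show "(x = a0 \<and> y = b0) \<or> (x = a1 \<and> y = b1) \<or> (x = a2 \<and> y = b2)"
        using xa yb xy r by auto
    next
      assume "(x = a0 \<and> y = b0) \<or> (x = a1 \<and> y = b1) \<or> (x = a2 \<and> y = b2)"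
      then show "x < y" using r by auto
    qed
  qed
qed



lemma inj_dist2:
  fixes c :: "nat \<Rightarrow> nat \<Rightarrow> 'a" and n n' h i j :: nat
  assumes "inj_on (\<lambda>(k, j). c k j) ({0..h} \<times> {0..<3::nat})" "n \<le> h" "n' \<le> h" "i < 3" "j < 3"
    "(n, i) \<noteq> (n', j)"
  shows "c n i \<noteq> c n' j"
proof
  assume eq: "c n i = c n' j"
  have "(n, i) = (n', j)"
    by (rule inj_onD[OF assms(1)]) (use eq assms(2-5) in auto)
  then show False using assms(6) by simp
qed

lemma rows_3C:
  fixes c :: "nat \<Rightarrow> nat \<Rightarrow> 'a::order"
  assumes fin: "finite S" and inj: "inj_on (\<lambda>(k, j). c k j) ({0..h} \<times> {0..<3})"
    and lev: "\<forall>m\<le>h. level S m = {c m 0, c m 1, c m 2}" and m: "Suc m \<le> h"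
    and rel: "\<forall>i<3. \<forall>j<3. c m i < c (Suc m) j \<longleftrightarrow> i = j"
  shows "type_3C (level S m \<union> level S (Suc m))"
proof -
  have D: "c n i \<noteq> c n' j" if "n \<le> h" "n' \<le> h" "i < 3" "j < 3" "(n, i) \<noteq> (n', j)" for n i n' j
    using inj_dist2[OF inj that] .
  have m': "m \<le> h" using m by simp
  have lm: "level S m = {c m 0, c m 1, c m 2}" using lev m' by simp
  have lsm: "level S (Suc m) = {c (Suc m) 0, c (Suc m) 1, c (Suc m) 2}" using lev m by simp
  have un: "level S m \<union> level S (Suc m) = {c m 0, c m 1, c m 2, c (Suc m) 0, c (Suc m) 1, c (Suc m) 2}"
    using lm lsm by auto
  have d: "distinct [c m 0, c m 1, c m 2, c (Suc m) 0, c (Suc m) 1, c (Suc m) 2]"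
    using m m' by (simp add: D)
  have r: "c m 0 < c (Suc m) 0" "c m 1 < c (Suc m) 1" "c m 2 < c (Suc m) 2"
      "\<not> c m 0 < c (Suc m) 1" "\<not> c m 0 < c (Suc m) 2" "\<not> c m 1 < c (Suc m) 0" "\<not> c m 1 < c (Suc m) 2"
      "\<not> c m 2 < c (Suc m) 0" "\<not> c m 2 < c (Suc m) 1"
    using rel unfolding all3 by simp_all
  have aa: "\<forall>x\<in>{c m 0, c m 1, c m 2}. \<forall>y\<in>{c m 0, c m 1, c m 2}. \<not> x < y"
    using level_antichain[of _ S m] lm by blast
  have bb: "\<forall>x\<in>{c (Suc m) 0, c (Suc m) 1, c (Suc m) 2}. \<forall>y\<in>{c (Suc m) 0, c (Suc m) 1, c (Suc m) 2}. \<not> x < y"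
    using level_antichain[of _ S "Suc m"] lsm by blast
  have ba: "\<forall>x\<in>{c (Suc m) 0, c (Suc m) 1, c (Suc m) 2}. \<forall>y\<in>{c m 0, c m 1, c m 2}. \<not> x < y"
  proof (intro ballI notI)
    fix x y assume "x \<in> {c (Suc m) 0, c (Suc m) 1, c (Suc m) 2}" "y \<in> {c m 0, c m 1, c m 2}" "x < y"
    then have "x \<in> level S (Suc m)" "y \<in> level S m" using lm lsm by auto
    from level_mono_lt[OF this \<open>x < y\<close>] show False by simp
  qed
  show ?thesis unfolding un by (rule type3C_intro[OF d r aa bb ba])
qed

lemma nice_top:
  fixes c :: "nat \<Rightarrow> nat \<Rightarrow> 'a::order"
  assumes fin: "finite S" and nice: "is_nice S"
    and lev: "\<forall>m\<le>height S. level S m = {c m 0, c m 1, c m 2}" and h1: "1 \<le> height S"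
    and rel: "\<forall>i<3. \<forall>j<3. c (height S - 1) i < c (Suc (height S - 1)) j \<longleftrightarrow> i = j"
  shows False
proof -
  define h where "h = height S"
  have hh: "Suc (h - 1) = h" using h1 unfolding h_def by simp
  have lt: "level S (h - 1) = {c (h - 1) 0, c (h - 1) 1, c (h - 1) 2}" using lev unfolding h_def by simp
  have lh: "level S h = {c h 0, c h 1, c h 2}" using lev unfolding h_def by simp
  have rel': "\<forall>i<3. \<forall>j<3. c (h - 1) i < c h j \<longleftrightarrow> i = j" using rel hh unfolding h_def by simp
  define x where "x = c (h - 1) 0"
  define y where "y = c h 0"
  have xS: "x \<in> S" "lv S x = h - 1" using lt level_iff[OF fin] unfolding x_def by auto
  have yS: "y \<in> S" using lh level_sub unfolding y_def by blast
  have xy: "x < y" using rel' unfolding x_def y_def all3 by simp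
  have "{z \<in> S. x < z} \<subseteq> {z \<in> S. y \<le> z}"
  proof
    fix z assume z: "z \<in> {z \<in> S. x < z}"
    then have zS: "z \<in> S" "x < z" by auto
    have "lv S x < lv S z" using lv_mono[OF fin xS(1) zS(1) zS(2)] .
    moreover have "lv S z \<le> h" using lv_le_height[OF fin zS(1)] unfolding h_def .
    ultimately have "lv S z = h" using xS(2) by simp
    then have "z \<in> level S h" using lv_in[OF fin zS(1)] by simp
    then have "z = c h 0 \<or> z = c h 1 \<or> z = c h 2" using lh by simp
    moreover have "\<not> x < c h 1" "\<not> x < c h 2" using rel' unfolding x_def all3 by simp_all
    ultimately have "z = y" using zS(2) unfolding y_def by auto
    then show "z \<in> {z \<in> S. y \<le> z}" using zS by simp
  qed
  then show False using nice xS(1) yS xy unfolding is_nice_def by blast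
qed



theorem lemma5p3:
  fixes P R :: "'a::order set" and r :: "'a \<Rightarrow> 'a" and k l :: nat
  assumes "in_N2 P"
    and "retraction P r R"
    and "width R = 3"
    and "tower_of_nice_sections R"
    and "l + 1 \<le> height R"
    and "set_less (level R l) (level R (l + 1))"
    and "k + 1 \<le> height P"
    and "level R l = level P k \<or>
         (level R l \<subset> level P k \<and> type_3C (level P k \<union> level P (k + 1)) \<and>
          r ` level P (k + 1) \<subseteq> levels_between R (l + 1) (height R))"
  shows "k + 3 \<le> height P \<and> type_3C (level P (k + 1) \<union> level P (k + 2)) \<and>
         r ` level P (k + 1) = level R (l + 1) \<and> level R (l + 1) \<subseteq> level P (k + 2)"
proof -
  note N2 = assms(1)[unfolded in_N2_def]
  have finP: "finite P" and secP: "is_section P" and niceP: "is_nice P" and h2: "2 \<le> height P"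
    and hz: "\<And>a b. a + 2 \<le> b \<Longrightarrow> set_less (level P a) (level P b)"
    using N2 by auto
  define h where "h = height P"
  have h1: "1 \<le> height P" using h2 by simp
  obtain c :: "nat \<Rightarrow> nat \<Rightarrow> 'a" where c:
    "inj_on (\<lambda>(k, j). c k j) ({0..height P} \<times> {0..<3})"
    "P = (\<lambda>(k, j). c k j) ` ({0..height P} \<times> {0..<3})"
    "\<forall>j<3. \<forall>k<height P. c k j < c (Suc k) j"
    "\<forall>k\<le>height P. \<forall>l\<le>height P. \<forall>i<3. \<forall>j<3.
            c k i < c l j \<longrightarrow> c k ((i + 1) mod 3) < c l ((j + 1) mod 3)"
    "\<not> (\<exists>k. set_less (level P k) (level P (Suc k)) \<and> card (level P k) = 3 \<and> card (level P (Suc k)) = 3)"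
    "\<forall>m\<le>height P. level P m = {c m 0, c m 1, c m 2}"
    "\<forall>m\<le>height P. \<forall>j<3. lv P (c m j) = m"
    by (rule section_rows[OF finP secP h1])
  have Pne: "P \<noteq> {}" using c(2) by auto
  have ret1: "\<forall>x\<in>P. r x \<in> P" and ret2: "\<forall>x\<in>P. \<forall>y\<in>P. x \<le> y \<longrightarrow> r x \<le> r y"
    and ret3: "\<forall>x\<in>P. r (r x) = r x" and ret4: "r ` P = R"
    using assms(2) unfolding retraction_def by auto
  have rP: "\<And>x. x \<in> P \<Longrightarrow> r x \<in> R" using ret4 by blast
  have rmono: "\<And>x y. x \<in> P \<Longrightarrow> y \<in> P \<Longrightarrow> x \<le> y \<Longrightarrow> r x \<le> r y" using ret2 by blast
  have RP: "R \<subseteq> P" using ret1 ret4 by blast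
  have rfix: "\<And>y. y \<in> R \<Longrightarrow> r y = y"
  proof -
    fix y assume "y \<in> R"
    then obtain z where "z \<in> P" "y = r z" using ret4 by blast
    then show "r y = y" using ret3 by simp
  qed
  have finR: "finite R" using finite_subset[OF RP finP] .
  have Rne: "R \<noteq> {}" using ret4 Pne by auto
  obtain Qs where Qs: "Qs \<noteq> []" "R = \<Union>(set Qs)"
    "\<forall>i<length Qs. is_section (Qs ! i) \<and> is_nice (Qs ! i)"
    "\<forall>i j. i < j \<and> j < length Qs \<longrightarrow> set_less (Qs ! i) (Qs ! j)"
    using assms(4) unfolding tower_of_nice_sections_def by blast
  interpret tw: tower Qs R
    by (unfold_locales) (use Qs finR in auto)
  have lvPin: "\<And>x. x \<in> P \<Longrightarrow> x \<in> level P (lv P x)" using lv_in[OF finP] by blast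
  have lvPle: "\<And>x. x \<in> P \<Longrightarrow> lv P x \<le> height P" using lv_le_height[OF finP] by blast
  have hzP: "\<And>x y. x \<in> P \<Longrightarrow> y \<in> P \<Longrightarrow> lv P x + 2 \<le> lv P y \<Longrightarrow> x < y"
  proof -
    fix x y assume xy: "x \<in> P" "y \<in> P" "lv P x + 2 \<le> lv P y"
    have "set_less (level P (lv P x)) (level P (lv P y))" using hz[OF xy(3)] .
    then show "x < y" using lvPin[OF xy(1)] lvPin[OF xy(2)] unfolding set_less_def by blast
  qed
  have upP: "\<And>x y. x \<in> P \<Longrightarrow> y \<in> P \<Longrightarrow> x < y \<Longrightarrow> lv P x < lv P y" using lv_mono[OF finP] by blast
  have levP: "\<And>x m. x \<in> level P m \<longleftrightarrow> x \<in> P \<and> lv P x = m" using level_iff[OF finP] by blast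
  have levR: "\<And>x m. x \<in> level R m \<longleftrightarrow> x \<in> R \<and> lv R x = m" using level_iff[OF finR] by blast
  have upR: "\<And>x y. x \<in> R \<Longrightarrow> y \<in> R \<Longrightarrow> x < y \<Longrightarrow> lv R x < lv R y" using lv_mono[OF finR] by blast
  have lvRle: "\<And>x. x \<in> R \<Longrightarrow> lv R x \<le> height R" using lv_le_height[OF finR] by blast
  have belowP: "\<And>x m. x \<in> level P (Suc m) \<Longrightarrow> \<exists>y\<in>level P m. y < x" using level_below[OF finP] by blast
  have belowR: "\<And>x m. x \<in> level R (Suc m) \<Longrightarrow> \<exists>y\<in>level R m. y < x" using level_below[OF finR] by blast
  have card3P: "\<And>m. m \<le> height P \<Longrightarrow> card (level P m) = 3"
  proof -
    fix m assume m: "m \<le> height P"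
    show "card (level P m) = 3"
      using c(6) m inj_dist[OF c(1) m, of 0 1] inj_dist[OF c(1) m, of 0 2] inj_dist[OF c(1) m, of 1 2]
      by simp
  qed
  have neP: "\<And>m. m \<le> height P \<Longrightarrow> level P m \<noteq> {}" using level_ne_iff[OF finP Pne] by blast
  have neR: "\<And>m. m \<le> height R \<Longrightarrow> level R m \<noteq> {}" using level_ne_iff[OF finR Rne] by blast
  have Rl_ne: "level R l \<noteq> {}" using neR assms(5) by simp
  have Rl1_ne: "level R (Suc l) \<noteq> {}" using neR assms(5) by simp
  have sl: "set_less (level R l) (level R (Suc l))" using assms(6) by simp
  have RlA: "level R l \<subseteq> level P k"
  proof (cases "level R l = level P k")
    case True then show ?thesis by simp
  next
    case False
    from assms(8) False have "level R l \<subset> level P k" by argo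
    then show ?thesis by simp
  qed
  have kh: "k < height P" using assms(7) by simp
  have Ane: "level P k \<noteq> {}" using neP kh by simp
  have Bne: "level P (Suc k) \<noteq> {}" using neP kh by simp
  note rfk = row_facts[OF c(1) c(3) c(4) c(5) c(6) kh]
  have case_b: "level R l \<subset> level P k \<and> type_3C (level P k \<union> level P (k + 1)) \<and>
          r ` level P (k + 1) \<subseteq> levels_between R (l + 1) (height R)" if ne: "level R l \<noteq> level P k"
    using assms(8) ne by argo
  have claim1: "\<And>x. x \<in> level P (Suc k) \<Longrightarrow> Suc l \<le> lv R (r x)"
  proof -
    fix x assume xB: "x \<in> level P (Suc k)"
    have xP: "x \<in> P" "lv P x = Suc k" using xB levP by auto
    show "Suc l \<le> lv R (r x)"
    proof (cases "level R l = level P k")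
      case False
      have "r ` level P (k + 1) \<subseteq> levels_between R (l + 1) (height R)" by (rule case_b[OF False, THEN conjunct2, THEN conjunct2])
      moreover have "r x \<in> r ` level P (k + 1)" using xB by simp
      ultimately have "r x \<in> levels_between R (l + 1) (height R)" by (rule subsetD)
      then obtain i where "i \<in> {l + 1..height R}" "r x \<in> level R i" unfolding levels_between_def by blast
      then show ?thesis using levR by auto
    next
      case True
      obtain a where a: "a \<in> level P k" "a < x" using belowP[OF xB] by blast
      have aR: "a \<in> level R l" using a(1) True by simp
      then have aR': "a \<in> R" "lv R a = l" using levR by auto
      have aP: "a \<in> P" using aR' RP by blast
      have "r a \<le> r x" using rmono[OF aP xP(1)] a(2) by simp
      then have ax: "a \<le> r x" using rfix[OF aR'(1)] by simp
      show ?thesis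
      proof (cases "r x = a")
        case False
        then have "a < r x" using ax by simp
        then have "lv R a < lv R (r x)" using upR[OF aR'(1) rP[OF xP(1)]] by blast
        then show ?thesis using aR'(2) by simp
      next
        case True
        have "card (level R l) = 3" using \<open>level R l = level P k\<close> card3P kh by simp
        then have top: "1 \<le> l \<and> (\<forall>a\<in>level R l. \<exists>u\<in>level R (l - 1). \<not> u \<le> a)"
          using tw.level_top sl Rl1_ne by blast
        then obtain u where u: "u \<in> level R (l - 1)" "\<not> u \<le> a" using aR by blast
        have uR: "u \<in> R" "lv R u = l - 1" using u(1) levR by auto
        have uP: "u \<in> P" using uR RP by blast
        have "lv P u < k"
        proof (rule ccontr)
          assume "\<not> lv P u < k"
          then consider "lv P u = k" | "lv P u = Suc k" | "Suc (Suc k) \<le> lv P u" by arith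
          then show False
          proof cases
            case 1
            then have "u \<in> level R l" using \<open>level R l = level P k\<close> levP uP by simp
            then show False using uR top levR by auto
          next
            case 2
            then have "u \<in> level P (Suc k)" using levP uP by simp
            then obtain a' where "a' \<in> level P k" "a' < u" using belowP by blast
            then have "a' \<in> level R l" "a' < u" using \<open>level R l = level P k\<close> by auto
            then have "lv R a' < lv R u" using upR uR levR by blast
            then show False using \<open>a' \<in> level R l\<close> levR uR by auto
          next
            case 3
            obtain a' where "a' \<in> level P k" using Ane by blast
            then have "a' \<in> P" "lv P a' = k" using levP by auto
            then have "a' < u" using hzP[OF _ uP] 3 by simp
            moreover have "a' \<in> level R l" using \<open>a' \<in> level P k\<close> \<open>level R l = level P k\<close> by simp
            ultimately have "lv R a' < lv R u" using upR uR levR by blast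
            then show False using \<open>a' \<in> level R l\<close> levR uR by auto
          qed
        qed
        then have "u < x" using hzP[OF uP xP(1)] xP(2) by simp
        then have "r u \<le> r x" using rmono[OF uP xP(1)] by simp
        then have "u \<le> a" using rfix[OF uR(1)] \<open>r x = a\<close> by simp
        then show ?thesis using u(2) by simp
      qed
    qed
  qed
  have step1: "\<And>y. y \<in> level R (Suc l) \<Longrightarrow> Suc (Suc k) \<le> lv P y"
  proof -
    fix y assume yR: "y \<in> level R (Suc l)"
    have yP: "y \<in> P" using yR levR RP by blast
    have allb: "\<forall>a\<in>level R l. a < y" using sl yR unfolding set_less_def by blast
    obtain a where a: "a \<in> level R l" using Rl_ne by blast
    have aP: "a \<in> P" "lv P a = k" using a RlA levP by auto
    have "k < lv P y" using upP[OF aP(1) yP] allb a aP(2) by simp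
    moreover have "lv P y \<noteq> Suc k"
    proof
      assume yk: "lv P y = Suc k"
      then have yB: "y \<in> level P (Suc k)" using levP yP by simp
      show False
      proof (cases "level R l = level P k")
        case True
        obtain x where "x \<in> level P k" "\<not> x < y" using rfk(1) yB by blast
        then show False using allb True by blast
      next
        case False
        then have t3: "type_3C (level P k \<union> level P (k + 1))" by (rule case_b[THEN conjunct2, THEN conjunct1])
        obtain a1 a2 where a12: "a1 \<in> level R l" "a2 \<in> level R l" "a1 \<noteq> a2" using tw.level_two[OF Rl_ne] by blast
        have "a1 = a2"
          by (rule type3C_uniq[OF t3, of a1 a2 y]) (use a12 RlA yB allb in auto)
        then show False using a12 by simp
      qed
    qed
    ultimately show "Suc (Suc k) \<le> lv P y" by simp
  qed
  have lowR: "\<And>x. x \<in> level P (Suc k) \<Longrightarrow> \<exists>y'\<in>level R (Suc l). y' \<le> r x"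
  proof -
    fix x assume xB: "x \<in> level P (Suc k)"
    have xP: "x \<in> P" using xB levP by auto
    show "\<exists>y'\<in>level R (Suc l). y' \<le> r x"
      using level_below_le[OF finR rP[OF xP] claim1[OF xB]] .
  qed
  have squeeze: "\<And>x y. x \<in> level P (Suc k) \<Longrightarrow> y \<in> level R (Suc l) \<Longrightarrow> r x \<le> y \<Longrightarrow> r x = y"
  proof -
    fix x y assume xB: "x \<in> level P (Suc k)" and yR: "y \<in> level R (Suc l)" and le: "r x \<le> y"
    obtain y' where y': "y' \<in> level R (Suc l)" "y' \<le> r x" using lowR[OF xB] by blast
    have "y' \<le> y" using y'(2) le by simp
    then have "y' = y" using level_antichain_le[OF y'(1) yR] by simp
    then show "r x = y" using y'(2) le by simp
  qed
  have below_img: "\<And>x y. x \<in> level P (Suc k) \<Longrightarrow> y \<in> level R (Suc l) \<Longrightarrow> x < y \<Longrightarrow> r x = y"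
  proof -
    fix x y assume xB: "x \<in> level P (Suc k)" and yR: "y \<in> level R (Suc l)" and xy: "x < y"
    have xP: "x \<in> P" using xB levP by auto
    have yR': "y \<in> R" using yR levR by auto
    have "r x \<le> r y" using rmono[OF xP _ ] RP yR' xy by auto
    then have "r x \<le> y" using rfix[OF yR'] by simp
    then show "r x = y" using squeeze[OF xB yR] by simp
  qed
  have high_const: "\<And>y x. y \<in> level R (Suc l) \<Longrightarrow> Suc (Suc (Suc k)) \<le> lv P y \<Longrightarrow> x \<in> level P (Suc k) \<Longrightarrow> r x = y"
  proof -
    fix y x assume yR: "y \<in> level R (Suc l)" and yh: "Suc (Suc (Suc k)) \<le> lv P y" and xB: "x \<in> level P (Suc k)"
    have xP: "x \<in> P" "lv P x = Suc k" using xB levP by auto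
    have yP: "y \<in> P" using yR levR RP by blast
    have "x < y" using hzP[OF xP(1) yP] xP(2) yh by simp
    then show "r x = y" using below_img[OF xB yR] by simp
  qed
  obtain x0 where x0: "x0 \<in> level P (Suc k)" using Bne by blast
  have step3: "\<And>y. y \<in> level R (Suc l) \<Longrightarrow> lv P y = Suc (Suc k)"
  proof (rule ccontr)
    fix y assume yR: "y \<in> level R (Suc l)" and ne: "lv P y \<noteq> Suc (Suc k)"
    then have yh: "Suc (Suc (Suc k)) \<le> lv P y" using step1[OF yR] by simp
    obtain a b where ab: "a \<in> level R (Suc l)" "b \<in> level R (Suc l)" "a \<noteq> b" using tw.level_two[OF Rl1_ne] by blast
    obtain y2 where y2: "y2 \<in> level R (Suc l)" "y2 \<noteq> y" using ab by metis
    have y2P: "y2 \<in> P" using y2 levR RP by blast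
    show False
    proof (cases "Suc (Suc (Suc k)) \<le> lv P y2")
      case True
      then show False using high_const[OF yR yh x0] high_const[OF y2(1) True x0] y2(2) by simp
    next
      case False
      then have "lv P y2 = Suc (Suc k)" using step1[OF y2(1)] by simp
      then have "y2 \<in> level P (Suc (Suc k))" using levP y2P by simp
      then obtain x where x: "x \<in> level P (Suc k)" "x < y2" using belowP by blast
      have "r x = y2" using below_img[OF x(1) y2(1) x(2)] .
      moreover have "r x = y" using high_const[OF yR yh x(1)] .
      ultimately show False using y2(2) by simp
    qed
  qed
  have RC: "level R (Suc l) \<subseteq> level P (Suc (Suc k))"
    using step3 levP levR RP by blast
  have k2: "Suc (Suc k) \<le> height P"
  proof -
    obtain y where "y \<in> level R (Suc l)" using Rl1_ne by blast
    then show ?thesis using step3 lvPle levR RP by fastforce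
  qed
  have k1h: "Suc k < height P" using k2 by simp
  note rfk1 = row_facts[OF c(1) c(3) c(4) c(5) c(6) k1h]
  have rel3: "\<forall>i<3. \<forall>j<3. c (Suc k) i < c (Suc (Suc k)) j \<longleftrightarrow> i = j"
  proof (rule ccontr)
    assume "\<not> ?thesis"
    then have cr: "\<forall>y1\<in>level P (Suc (Suc k)). \<forall>y2\<in>level P (Suc (Suc k)). y1 \<noteq> y2 \<longrightarrow>
       (\<exists>x\<in>level P (Suc k). x < y1 \<and> x < y2)" using rfk1(2) by blast
    obtain a b where ab: "a \<in> level R (Suc l)" "b \<in> level R (Suc l)" "a \<noteq> b" using tw.level_two[OF Rl1_ne] by blast
    then obtain x where x: "x \<in> level P (Suc k)" "x < a" "x < b" using cr RC by blast
    then show False using below_img[OF x(1) ab(1) x(2)] below_img[OF x(1) ab(2) x(3)] ab(3) by simp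
  qed
  have t3: "type_3C (level P (Suc k) \<union> level P (Suc (Suc k)))"
    by (rule rows_3C[OF finP c(1) c(6) k2 rel3])
  have k3: "Suc (Suc (Suc k)) \<le> height P"
  proof (rule ccontr)
    assume "\<not> ?thesis"
    then have hk: "height P = Suc (Suc k)" using k2 by simp
    then have "\<forall>i<3. \<forall>j<3. c (height P - 1) i < c (Suc (height P - 1)) j \<longleftrightarrow> i = j" using rel3 by simp
    then show False using nice_top[OF finP niceP c(6) h1] by blast
  qed
  have img1: "r ` level P (Suc k) \<subseteq> level R (Suc l)"
  proof
    fix w assume "w \<in> r ` level P (Suc k)"
    then obtain x where xB: "x \<in> level P (Suc k)" and w: "w = r x" by blast
    have xP: "x \<in> P" "lv P x = Suc k" using xB levP by auto
    have wR: "w \<in> R" using rP[OF xP(1)] w by simp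
    obtain y' where y': "y' \<in> level R (Suc l)" "y' \<le> w" using lowR[OF xB] w by blast
    show "w \<in> level R (Suc l)"
    proof (cases "w = y'")
      case True then show ?thesis using y' by simp
    next
      case False
      then have "y' < w" using y'(2) by simp
      then have "lv R y' < lv R w" using upR y' wR levR by blast
      then have wl: "Suc (Suc l) \<le> lv R w" using y'(1) levR by auto
      have above: "\<And>v. v \<in> level R (Suc (Suc l)) \<Longrightarrow> w \<le> v"
      proof -
        fix v assume vR: "v \<in> level R (Suc (Suc l))"
        have vR': "v \<in> R" using vR levR by auto
        have vP: "v \<in> P" using vR' RP by blast
        obtain y'' where y'': "y'' \<in> level R (Suc l)" "y'' < v" using belowR[OF vR] by blast
        have "y'' \<in> P" "lv P y'' = Suc (Suc k)" using y''(1) step3 levR RP by auto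
        then have "Suc (Suc k) < lv P v" using upP[OF _ vP y''(2)] by simp
        then have "x < v" using hzP[OF xP(1) vP] xP(2) by simp
        then have "r x \<le> r v" using rmono[OF xP(1) vP] by simp
        then show "w \<le> v" using rfix[OF vR'] w by simp
      qed
      obtain v where v: "v \<in> level R (Suc (Suc l))" "v \<le> w" using level_below_le[OF finR wR wl] by blast
      have "w = v" using above[OF v(1)] v(2) by simp
      then have wv: "w \<in> level R (Suc (Suc l))" using v(1) by simp
      have "level R (Suc (Suc l)) \<noteq> {}" using v(1) by blast
      then obtain a b where ab: "a \<in> level R (Suc (Suc l))" "b \<in> level R (Suc (Suc l))" "a \<noteq> b"
        using tw.level_two by blast
      have "w = a" using above[OF ab(1)] level_antichain_le[OF wv ab(1)] by simp
      moreover have "w = b" using above[OF ab(2)] level_antichain_le[OF wv ab(2)] by simp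
      ultimately show ?thesis using ab(3) by simp
    qed
  qed
  have img2: "level R (Suc l) \<subseteq> r ` level P (Suc k)"
  proof
    fix y assume yR: "y \<in> level R (Suc l)"
    then have "y \<in> level P (Suc (Suc k))" using RC by blast
    then obtain x where x: "x \<in> level P (Suc k)" "x < y" using belowP by blast
    then have "r x = y" using below_img[OF x(1) yR x(2)] by simp
    then show "y \<in> r ` level P (Suc k)" using x(1) by blast
  qed
  show ?thesis using k3 t3 img1 img2 RC by simp
qed


end
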